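(* Let $P,N>0$ and $L\in\mathbb{Z}_{\ge2}$. For each $n$ let $\mathcal{D}=\mathcal{D}_n$ be a probability distribution supported on $\mathcal{B}^n(\sqrt{nP})$, and let $x_1,\dots,x_L$ be i.i.d. with law $\mathcal{D}$. Suppose $E(P,N,L)$ and $\overline{E}(P,N,L)$ are real numbers with $$E(P,N,L)\le\lim_{n\to\infty}-\frac1n\ln\Pr\left[\mathrm{rad}^2(x_1,\dots,x_L)\le nN\right],\qquad \overline{E}(P,N,L)\le\lim_{n\to\infty}-\frac1n\ln\Pr\left[\overline{\mathrm{rad}}^2(x_1,\dots,x_L)\le nN\right].$$ Then $$C_{L-1}(P,N)\ge\frac{E(P,N,L)}{L-1},\qquad \overline{C}_{L-1}(P,N)\ge\frac{\overline{E}(P,N,L)}{L-1}.$$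
   Context: $\mathcal{B}^n(y,r)$ is the closed Euclidean ball of radius $r$ centered at $y$; $\mathcal{B}^n(r)=\mathcal{B}^n(0,r)$. For $x_1,\dots,x_L\in\mathbb{R}^n$: the squared Chebyshev radius is $\mathrm{rad}^2(x_1,\dots,x_L)=\min_{y\in\mathbb{R}^n}\max_i\|x_i-y\|_2^2$; the average squared radius is $\overline{\mathrm{rad}}^2(x_1,\dots,x_L)=\frac1L\sum_i\|x_i-\bar x\|_2^2$ with $\bar x=\frac1L\sum_ix_i$. A finite $\mathcal{C}\subseteq\mathcal{B}^n(\sqrt{nP})$ is $(P,N,L-1)$-list-decodable if $|\mathcal{C}\cap\mathcal{B}^n(y,\sqrt{nN})|\le L-1$ for all $y\in\mathbb{R}^n$ (equivalently every $L$ distinct points have $\mathrm{rad}^2>nN$), and $(P,N,L-1)$-average-radius list-decodable if every $L$ distinct points have $\overline{\mathrm{rad}}^2>nN$. Rate $R(\mathcal{C})=\frac1n\ln|\mathcal{C}|$. $C_{L-1}(P,N)$ (resp. $\overline{C}_{L-1}(P,N)$) is $\limsup_{n\to\infty}$ of the supremum of $R(\mathcal{C})$ over $(P,N,L-1)$-list-decodable (resp. average-radius list-decodable) codes $\mathcal{C}\subseteq\mathcal{B}^n(\sqrt{nP})$. *)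

theory Defs
  imports "HOL-Probability.Probability"
begin

text \<open>Vectors of R^n are represented as extensional functions on {..<n},
  i.e. elements of PiE {..<n} UNIV (the space of the product measure
  PiM {..<n} lborel). A tuple (x_1,...,x_L) is a function on {..<L}.\<close>

definition Rn :: "nat \<Rightarrow> (nat \<Rightarrow> real) set" where
  "Rn n = ({..<n} \<rightarrow>\<^sub>E (UNIV :: real set))"

definition sqnorm :: "nat \<Rightarrow> (nat \<Rightarrow> real) \<Rightarrow> real" where
  "sqnorm n x = (\<Sum>i<n. (x i)\<^sup>2)"

definition rball :: "nat \<Rightarrow> (nat \<Rightarrow> real) \<Rightarrow> real \<Rightarrow> (nat \<Rightarrow> real) set" where
  "rball n y r = {x \<in> Rn n. sqrt (sqnorm n (\<lambda>i. x i - y i)) \<le> r}"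

definition cheb_rad2 :: "nat \<Rightarrow> nat \<Rightarrow> (nat \<Rightarrow> nat \<Rightarrow> real) \<Rightarrow> real" where
  "cheb_rad2 n L x = (INF y \<in> Rn n. Max ((\<lambda>i. sqnorm n (\<lambda>j. x i j - y j)) ` {..<L}))"

definition avg_rad2 :: "nat \<Rightarrow> nat \<Rightarrow> (nat \<Rightarrow> nat \<Rightarrow> real) \<Rightarrow> real" where
  "avg_rad2 n L x =
     (let xbar = (\<lambda>j. (\<Sum>i<L. x i j) / real L)
      in (\<Sum>i<L. sqnorm n (\<lambda>j. x i j - xbar j)) / real L)"

definition list_decodable :: "nat \<Rightarrow> real \<Rightarrow> real \<Rightarrow> nat \<Rightarrow> (nat \<Rightarrow> real) set \<Rightarrow> bool" where
  "list_decodable n P N L C \<longleftrightarrow> finite C \<and> C \<subseteq> rball n (\<lambda>_. 0) (sqrt (real n * P)) \<and>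
     (\<forall>y \<in> Rn n. card (C \<inter> rball n y (sqrt (real n * N))) \<le> L - 1)"

definition avg_list_decodable :: "nat \<Rightarrow> real \<Rightarrow> real \<Rightarrow> nat \<Rightarrow> (nat \<Rightarrow> real) set \<Rightarrow> bool" where
  "avg_list_decodable n P N L C \<longleftrightarrow> finite C \<and> C \<subseteq> rball n (\<lambda>_. 0) (sqrt (real n * P)) \<and>
     (\<forall>x. (\<forall>i<L. x i \<in> C) \<and> inj_on x {..<L} \<longrightarrow> avg_rad2 n L x > real n * N)"

definition code_rate :: "nat \<Rightarrow> (nat \<Rightarrow> real) set \<Rightarrow> real" where
  "code_rate n C = ln (real (card C)) / real n"

text \<open>C_{L-1}(P,N) and its average-radius variant, as extended reals.\<close>
definition list_capacity :: "real \<Rightarrow> real \<Rightarrow> nat \<Rightarrow> ereal" where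
  "list_capacity P N L =
     limsup (\<lambda>n. SUP C \<in> {C. list_decodable n P N L C}. ereal (code_rate n C))"

definition avg_list_capacity :: "real \<Rightarrow> real \<Rightarrow> nat \<Rightarrow> ereal" where
  "avg_list_capacity P N L =
     limsup (\<lambda>n. SUP C \<in> {C. avg_list_decodable n P N L C}. ereal (code_rate n C))"

definition neg_log_rate :: "nat \<Rightarrow> real \<Rightarrow> ereal" where
  "neg_log_rate n p = (if p = 0 then \<infinity> else ereal (- ln p / real n))"

end

theory Submission
  imports Defs
begin


abbreviation "QQ n (L::nat) \<equiv> PiM {..<L} (\<lambda>_. PiM {..<n} (\<lambda>_. lborel :: real measure))"

lemma coord_meas[measurable]:
  assumes "i < L" "j < n"
  shows "(\<lambda>x. x i j) \<in> borel_measurable (QQ n L)"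
proof -
  have "(\<lambda>x. x i) \<in> measurable (QQ n L) (PiM {..<n} (\<lambda>_. lborel :: real measure))"
    using assms by (intro measurable_component_singleton) auto
  moreover have "(\<lambda>v. v j) \<in> borel_measurable (PiM {..<n} (\<lambda>_. lborel :: real measure))"
    using assms by (simp add: measurable_component_singleton)
  ultimately show ?thesis using measurable_compose by fastforce
qed

lemma sqnorm_meas[measurable]:
  assumes "i < L"
  shows "(\<lambda>x. sqnorm n (\<lambda>j. x i j - y j)) \<in> borel_measurable (QQ n L)"
  unfolding sqnorm_def using assms by (intro borel_measurable_sum borel_measurable_power borel_measurable_diff) auto

lemma g_meas:
  "(\<lambda>x. Max ((\<lambda>i. sqnorm n (\<lambda>j. x i j - y j)) ` {..<L})) \<in> borel_measurable (QQ n L)"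
  by (intro borel_measurable_Max sqnorm_meas) auto

lemma avg_meas:
  "avg_rad2 n L \<in> borel_measurable (QQ n L)"
  unfolding avg_rad2_def Let_def sqnorm_def
  by (intro borel_measurable_sum borel_measurable_power borel_measurable_diff borel_measurable_divide coord_meas) auto



definition gg :: "nat \<Rightarrow> nat \<Rightarrow> (nat \<Rightarrow> nat \<Rightarrow> real) \<Rightarrow> (nat \<Rightarrow> real) \<Rightarrow> real" where
  "gg n L x y = Max ((\<lambda>i. sqnorm n (\<lambda>j. x i j - y j)) ` {..<L})"

definition Yq :: "nat \<Rightarrow> (nat \<Rightarrow> real) set" where
  "Yq n = PiE {..<n} (\<lambda>_. \<rat>)"

lemma sqnorm_nonneg: "sqnorm n v \<ge> 0"
  unfolding sqnorm_def by (intro sum_nonneg) auto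

lemma gg_ge: "i < L \<Longrightarrow> sqnorm n (\<lambda>j. x i j - y j) \<le> gg n L x y"
  unfolding gg_def by (intro Max_ge) auto

lemma gg_nonneg: "L \<ge> 1 \<Longrightarrow> gg n L x y \<ge> 0"
  using gg_ge[of 0 L n x y] sqnorm_nonneg[of n] by (meson dual_order.trans less_le_trans zero_less_one)

lemma Yq_sub: "Yq n \<subseteq> Rn n"
  unfolding Yq_def Rn_def by auto

lemma Yq_ne: "Yq n \<noteq> {}"
proof -
  have "restrict (\<lambda>_. 0) {..<n} \<in> Yq n" unfolding Yq_def by auto
  then show ?thesis by blast
qed

lemma Yq_countable: "countable (Yq n)"
  unfolding Yq_def by (intro countable_PiE) (auto simp: countable_rat)

lemma approx_rat:
  assumes "y \<in> Rn n" "\<delta> > 0"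
  shows "\<exists>y'\<in>Yq n. \<forall>j<n. \<bar>y' j - y j\<bar> \<le> \<delta>"
proof -
  have "\<forall>j. \<exists>q. q \<in> \<rat> \<and> y j < q \<and> q < y j + \<delta>"
    using Rats_dense_in_real assms(2) by (metis less_add_same_cancel1)
  then obtain q where q: "\<And>j. q j \<in> \<rat> \<and> y j < q j \<and> q j < y j + \<delta>" by metis
  have "restrict q {..<n} \<in> Yq n" using q by (auto simp: Yq_def)
  moreover have "\<forall>j<n. \<bar>restrict q {..<n} j - y j\<bar> \<le> \<delta>"
  proof (intro allI impI)
    fix j assume "j < n"
    then show "\<bar>restrict q {..<n} j - y j\<bar> \<le> \<delta>" using q[of j] by auto
  qed
  ultimately show ?thesis by blast
qed

lemma term_bound:
  fixes t s \<delta> :: real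
  assumes "\<bar>s\<bar> \<le> \<delta>" "\<delta> \<le> 1"
  shows "(t + s)^2 \<le> (1 + \<delta>) * t^2 + 2 * \<delta>"
proof -
  have "0 \<le> (\<bar>t\<bar> - 1)^2" by simp
  then have "2 * \<bar>t\<bar> \<le> t^2 + 1" by (simp add: power2_eq_square algebra_simps abs_mult_self_eq)
  have h1: "2 * t * s \<le> \<delta> * (t^2 + 1)"
  proof -
    have "t * s \<le> \<bar>t\<bar> * \<bar>s\<bar>" by (metis abs_ge_self abs_mult)
    then have "2 * t * s \<le> 2 * \<bar>t\<bar> * \<bar>s\<bar>" by simp
    also have "\<dots> \<le> 2 * \<bar>t\<bar> * \<delta>" using assms by (intro mult_left_mono) auto
    also have "\<dots> \<le> (t^2 + 1) * \<delta>" using \<open>2 * \<bar>t\<bar> \<le> t^2 + 1\<close> assms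
      by (intro mult_right_mono) auto
    finally show ?thesis by (simp add: mult.commute)
  qed
  have "s^2 = \<bar>s\<bar> * \<bar>s\<bar>" by (simp add: power2_eq_square abs_mult_self_eq)
  also have "\<dots> \<le> \<delta> * 1" using assms by (intro mult_mono) auto
  finally have h2: "s^2 \<le> \<delta>" by simp
  show ?thesis using h1 h2 by (simp add: power2_eq_square algebra_simps)
qed


lemma sqnorm_bound:
  assumes "\<forall>j<n. \<bar>y' j - y j\<bar> \<le> \<delta>" "\<delta> \<le> 1"
  shows "sqnorm n (\<lambda>j. a j - y' j) \<le> (1 + \<delta>) * sqnorm n (\<lambda>j. a j - y j) + 2 * \<delta> * n"
proof -
  have "sqnorm n (\<lambda>j. a j - y' j) = (\<Sum>j<n. ((a j - y j) + (y j - y' j))^2)"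
    unfolding sqnorm_def by simp
  also have "\<dots> \<le> (\<Sum>j<n. (1 + \<delta>) * (a j - y j)^2 + 2 * \<delta>)"
    using assms by (intro sum_mono term_bound) (auto simp: abs_minus_commute)
  also have "\<dots> = (1 + \<delta>) * sqnorm n (\<lambda>j. a j - y j) + 2 * \<delta> * n"
    unfolding sqnorm_def by (simp add: sum.distrib sum_distrib_left)
  finally show ?thesis .
qed

lemma gg_bound:
  assumes "\<forall>j<n. \<bar>y' j - y j\<bar> \<le> \<delta>" "\<delta> \<le> 1" "\<delta> \<ge> 0" "L \<ge> 1"
  shows "gg n L x y' \<le> (1 + \<delta>) * gg n L x y + 2 * \<delta> * n"
proof -
  have "\<forall>i<L. sqnorm n (\<lambda>j. x i j - y' j) \<le> (1 + \<delta>) * gg n L x y + 2 * \<delta> * n"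
  proof (intro allI impI)
    fix i assume i: "i < L"
    have "sqnorm n (\<lambda>j. x i j - y' j) \<le> (1 + \<delta>) * sqnorm n (\<lambda>j. x i j - y j) + 2 * \<delta> * n"
      using sqnorm_bound[OF assms(1,2)] by simp
    also have "\<dots> \<le> (1 + \<delta>) * gg n L x y + 2 * \<delta> * n"
      using gg_ge[OF i] assms by (intro add_right_mono mult_left_mono) auto
    finally show "sqnorm n (\<lambda>j. x i j - y' j) \<le> (1 + \<delta>) * gg n L x y + 2 * \<delta> * n" .
  qed
  moreover have "0 \<in> {..<L}" using assms(4) by simp
  then have "{..<L} \<noteq> {}" by blast
  ultimately show ?thesis unfolding gg_def[of n L x y'] by (subst Max_le_iff) auto
qed

lemma cheb_eq_gg: "cheb_rad2 n L x = (INF y \<in> Rn n. gg n L x y)"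
  unfolding cheb_rad2_def gg_def ..

lemma cheb_eq_rat:
  assumes "L \<ge> 1"
  shows "cheb_rad2 n L x = (INF y \<in> Yq n. gg n L x y)"
proof -
  have bdd: "bdd_below ((\<lambda>y. gg n L x y) ` A)" for A
    using gg_nonneg[OF assms] by (intro bdd_belowI[of _ 0]) auto
  have Rne: "Rn n \<noteq> {}" using Yq_ne Yq_sub by blast
  have le1: "(INF y \<in> Rn n. gg n L x y) \<le> (INF y \<in> Yq n. gg n L x y)"
    by (rule cINF_superset_mono[OF Yq_ne bdd Yq_sub]) simp
  have le2: "(INF y \<in> Yq n. gg n L x y) \<le> (INF y \<in> Rn n. gg n L x y)"
  proof (rule cINF_greatest[OF Rne])
    fix y assume y: "y \<in> Rn n"
    show "(INF y \<in> Yq n. gg n L x y) \<le> gg n L x y"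
    proof (rule field_le_epsilon)
      fix e :: real assume e: "e > 0"
      define \<delta> where "\<delta> = min 1 (e / (gg n L x y + 2 * n + 1))"
      have gpos: "gg n L x y + 2 * n + 1 > 0" using gg_nonneg[OF assms, of n x y] by simp
      have d0: "\<delta> > 0" using e gpos by (simp add: \<delta>_def)
      have d1: "\<delta> \<le> 1" by (simp add: \<delta>_def)
      have "\<delta> \<le> e / (gg n L x y + 2 * n + 1)" by (simp add: \<delta>_def)
      then have d2: "\<delta> * (gg n L x y + 2 * n + 1) \<le> e"
        using gpos by (simp add: pos_le_divide_eq)
      have d3: "(1 + \<delta>) * gg n L x y + 2 * \<delta> * n = gg n L x y + \<delta> * (gg n L x y + 2 * n + 1) - \<delta>"
        by (simp add: algebra_simps)
      obtain y' where y': "y' \<in> Yq n" "\<forall>j<n. \<bar>y' j - y j\<bar> \<le> \<delta>"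
        using approx_rat[OF y d0] by blast
      have "(INF y \<in> Yq n. gg n L x y) \<le> gg n L x y'"
        by (rule cINF_lower[OF bdd y'(1)])
      also have "\<dots> \<le> (1 + \<delta>) * gg n L x y + 2 * \<delta> * n"
        using gg_bound[OF y'(2) d1 _ assms] d0 by simp
      also have "\<dots> \<le> gg n L x y + e"
        using d2 d0 d3 by linarith
      finally show "(INF y \<in> Yq n. gg n L x y) \<le> gg n L x y + e" .
    qed
  qed
  show ?thesis using le1 le2 unfolding cheb_eq_gg by linarith
qed



lemma core:
  fixes D :: "'a measure" and S :: "(nat \<Rightarrow> 'a) set" and G :: "'a \<Rightarrow> bool" and m L :: nat
  assumes D: "prob_space D" and S: "S \<in> sets (PiM {..<L} (\<lambda>_. D))"
    and G: "AE x in D. G x" and L: "L \<ge> 1" and m: "m \<ge> 1"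
    and mp: "real m ^ L * measure (PiM {..<L} (\<lambda>_. D)) S \<le> real m / 4"
  shows "\<exists>c I. (\<forall>i<m. c i \<in> space D \<and> G (c i)) \<and> I \<subseteq> {..<m} \<and> real m / 2 \<le> real (card I) \<and>
     (\<forall>\<sigma> \<in> {..<L} \<rightarrow>\<^sub>E I. inj_on \<sigma> {..<L} \<longrightarrow> (\<lambda>i\<in>{..<L}. c (\<sigma> i)) \<notin> S)"
proof -
  define Q where "Q = PiM {..<L} (\<lambda>_. D)"
  define \<Omega> where "\<Omega> = PiM {..<m} (\<lambda>_. D)"
  interpret \<Omega>: prob_space \<Omega> unfolding \<Omega>_def using D by (intro prob_space_PiM) auto
  define Inj where "Inj = {\<sigma> \<in> {..<L} \<rightarrow>\<^sub>E {..<m}. inj_on \<sigma> {..<L}}"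
  define T where "T \<sigma> \<omega> = (\<lambda>i\<in>{..<L}. \<omega> (\<sigma> i))" for \<sigma> :: "nat \<Rightarrow> nat" and \<omega> :: "nat \<Rightarrow> 'a"
  define A where "A \<sigma> = T \<sigma> -` S \<inter> space \<Omega>" for \<sigma>
  have InjS: "Inj \<subseteq> {..<L} \<rightarrow>\<^sub>E {..<m}" unfolding Inj_def by auto
  have finInj: "finite Inj" by (rule finite_subset[OF InjS]) (auto intro: finite_PiE)
  have "card Inj \<le> card ({..<L} \<rightarrow>\<^sub>E {..<m})" by (rule card_mono[OF _ InjS]) (auto intro: finite_PiE)
  also have "\<dots> = m ^ L" by (simp add: card_PiE)
  finally have cardInj: "card Inj \<le> m ^ L" .
  have Tmeas: "T \<sigma> \<in> measurable \<Omega> Q" if "\<sigma> \<in> Inj" for \<sigma>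
    unfolding T_def \<Omega>_def Q_def
  proof (rule measurable_restrict)
    fix i assume "i \<in> {..<L}"
    then have "\<sigma> i \<in> {..<m}" using that unfolding Inj_def by auto
    then show "(\<lambda>x. x (\<sigma> i)) \<in> measurable (PiM {..<m} (\<lambda>_. D)) D"
      by (rule measurable_component_singleton)
  qed
  have Tdistr: "distr \<Omega> Q (T \<sigma>) = Q" if "\<sigma> \<in> Inj" for \<sigma>
    using distr_PiM_reindex[of "{..<m}" "\<lambda>_. D" \<sigma> "{..<L}"] D that
    unfolding Inj_def T_def \<Omega>_def Q_def by auto
  have S': "S \<in> sets Q" using S unfolding Q_def .
  have Ameas: "A \<sigma> \<in> sets \<Omega>" if "\<sigma> \<in> Inj" for \<sigma>
    unfolding A_def using measurable_sets[OF Tmeas[OF that] S'] .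
  have Ameasure: "measure \<Omega> (A \<sigma>) = measure Q S" if "\<sigma> \<in> Inj" for \<sigma>
    using measure_distr[OF Tmeas[OF that] S'] Tdistr[OF that] unfolding A_def by simp
  define B where "B \<omega> = (\<Sum>\<sigma>\<in>Inj. indicator (A \<sigma>) \<omega> :: real)" for \<omega>
  have Bint: "integrable \<Omega> B" unfolding B_def
  proof (rule Bochner_Integration.integrable_sum)
    fix \<sigma> assume "\<sigma> \<in> Inj"
    show "integrable \<Omega> (indicator (A \<sigma>) :: _ \<Rightarrow> real)"
      by (rule integrable_real_indicator[OF Ameas[OF \<open>\<sigma> \<in> Inj\<close>]]) (simp add: \<Omega>.emeasure_eq_measure)
  qed
  have "integral\<^sup>L \<Omega> B = (\<Sum>\<sigma>\<in>Inj. measure \<Omega> (A \<sigma>))" unfolding B_def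
    using Ameas by (subst Bochner_Integration.integral_sum) (auto intro!: integrable_real_indicator sum.cong Bochner_Integration.integrable_sum
        simp: \<Omega>.emeasure_eq_measure Int_absorb2 sets.sets_into_space)
  also have "\<dots> = card Inj * measure Q S" using Ameasure by simp
  also have "\<dots> \<le> real m ^ L * measure Q S"
    using cardInj by (intro mult_right_mono) (auto simp flip: of_nat_power)
  also have "\<dots> \<le> real m / 4" using mp unfolding Q_def .
  finally have Bexp: "integral\<^sup>L \<Omega> B \<le> real m / 4" .
  have AEG: "AE \<omega> in \<Omega>. \<forall>i\<in>{..<m}. G (\<omega> i)"
    unfolding \<Omega>_def using D G by (intro AE_finite_allI AE_PiM_component) auto
  have "\<exists>\<omega>\<in>space \<Omega>. (\<forall>i<m. G (\<omega> i)) \<and> B \<omega> \<le> real m / 2"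
  proof (rule ccontr)
    assume neg: "\<not> ?thesis"
    have "AE \<omega> in \<Omega>. real m / 2 \<le> B \<omega>" using AEG AE_space[of \<Omega>]
      by eventually_elim (use neg in force)
    then have "real m / 2 \<le> integral\<^sup>L \<Omega> B" by (rule \<Omega>.integral_ge_const[OF Bint])
    then show False using Bexp m by simp
  qed
  then obtain \<omega> where \<omega>: "\<omega> \<in> space \<Omega>" "\<forall>i<m. G (\<omega> i)" "B \<omega> \<le> real m / 2" by blast
  define Bad where "Bad = {\<sigma>\<in>Inj. T \<sigma> \<omega> \<in> S}"
  have "B \<omega> = (\<Sum>\<sigma>\<in>Inj. indicator Bad \<sigma>)"
    unfolding B_def using \<omega>(1) by (intro sum.cong) (auto simp: A_def Bad_def indicator_def)
  also have "\<dots> = card (Inj \<inter> Bad)" using finInj by (simp add: indicator_def sum.If_cases Int_def)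
  also have "Inj \<inter> Bad = Bad" unfolding Bad_def by auto
  finally have BBad: "B \<omega> = card Bad" .
  define R where "R = (\<lambda>\<sigma>. \<sigma> 0) ` Bad"
  have finBad: "finite Bad" using finInj unfolding Bad_def by auto
  have "card R \<le> card Bad" unfolding R_def using finBad by (rule card_image_le)
  then have cR: "real (card R) \<le> real m / 2" using BBad \<omega>(3) by linarith
  define I where "I = {..<m} - R"
  have "card {..<m} - card R \<le> card I" unfolding I_def
    using finBad R_def by (intro diff_card_le_card_Diff) auto
  then have "real m - real (card R) \<le> real (card I)" by simp
  then have cI: "real m / 2 \<le> real (card I)" using cR by linarith
  have good: "(\<lambda>i\<in>{..<L}. \<omega> (\<sigma> i)) \<notin> S" if "\<sigma> \<in> {..<L} \<rightarrow>\<^sub>E I" "inj_on \<sigma> {..<L}" for \<sigma>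
  proof
    assume inS: "(\<lambda>i\<in>{..<L}. \<omega> (\<sigma> i)) \<in> S"
    have "\<sigma> \<in> Inj" using that unfolding Inj_def I_def by (auto simp: PiE_iff)
    then have "\<sigma> \<in> Bad" using inS unfolding Bad_def T_def by auto
    then have "\<sigma> 0 \<in> R" unfolding R_def by auto
    moreover have "\<sigma> 0 \<in> I" using that L by (auto simp: PiE_iff)
    ultimately show False unfolding I_def by auto
  qed
  have sp: "\<forall>i<m. \<omega> i \<in> space D" using \<omega>(1) unfolding \<Omega>_def by (auto simp: space_PiM PiE_iff)
  show ?thesis
    by (rule exI[of _ \<omega>], rule exI[of _ I]) (use sp \<omega>(2) cI good in \<open>auto simp: I_def\<close>)
qed



lemma pick_enum:
  assumes "finite T" "card T = L"
  shows "\<exists>h. h \<in> {..<L} \<rightarrow>\<^sub>E T \<and> inj_on h {..<L} \<and> h ` {..<L} = T"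
proof -
  obtain h where h: "bij_betw h {0..<card T} T" using ex_bij_betw_nat_finite[OF assms(1)] by blast
  then have h': "bij_betw h {..<L} T" using assms(2) by (simp add: atLeast0LessThan)
  show ?thesis
    by (rule exI[of _ "restrict h {..<L}"])
       (use h' in \<open>auto simp: bij_betw_def inj_on_def\<close>)
qed

lemma pull_back:
  assumes "\<forall>i<L. x i \<in> c ` I" "inj_on x {..<L}"
  defines "\<sigma> \<equiv> (\<lambda>i\<in>{..<L}. inv_into I c (x i))"
  shows "\<sigma> \<in> {..<L} \<rightarrow>\<^sub>E I" "inj_on \<sigma> {..<L}" "(\<lambda>i\<in>{..<L}. c (\<sigma> i)) = restrict x {..<L}"
proof -
  show "\<sigma> \<in> {..<L} \<rightarrow>\<^sub>E I" using assms(1) unfolding \<sigma>_def by (auto intro: inv_into_into)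
  show "inj_on \<sigma> {..<L}"
  proof (rule inj_onI)
    fix i j assume ij: "i \<in> {..<L}" "j \<in> {..<L}" "\<sigma> i = \<sigma> j"
    have xi: "x i = c (\<sigma> i)" using ij(1,2) assms(1) unfolding \<sigma>_def by (simp add: f_inv_into_f)
    have xj: "x j = c (\<sigma> j)" using ij(1,2) assms(1) unfolding \<sigma>_def by (simp add: f_inv_into_f)
    have "x i = x j" using xi xj ij(3) by simp
    then show "i = j" using assms(2) ij by (auto dest: inj_onD)
  qed
  show "(\<lambda>i\<in>{..<L}. c (\<sigma> i)) = restrict x {..<L}"
    using assms(1) unfolding \<sigma>_def by (auto simp: f_inv_into_f)
qed

lemma code_exists:
  fixes Dn :: "(nat \<Rightarrow> real) measure" and f :: "(nat \<Rightarrow> nat \<Rightarrow> real) \<Rightarrow> real" and t :: real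
  assumes D: "prob_space Dn" and Ds: "sets Dn = sets (PiM {..<n} (\<lambda>_. lborel))"
    and AEb: "AE x in Dn. x \<in> B" and L: "L \<ge> 2"
    and fmeas: "{x \<in> space (PiM {..<L} (\<lambda>_. Dn)). f x \<le> t} \<in> sets (PiM {..<L} (\<lambda>_. Dn))"
    and fconst: "\<And>v. v \<in> Rn n \<Longrightarrow> f (\<lambda>i\<in>{..<L}. v) \<le> t"
    and m: "m \<ge> 1"
    and mp: "real m ^ L * measure (PiM {..<L} (\<lambda>_. Dn)) {x \<in> space (PiM {..<L} (\<lambda>_. Dn)). f x \<le> t} \<le> real m / 4"
  shows "\<exists>C. finite C \<and> C \<subseteq> B \<and> real m / (2 * (real L - 1)) \<le> real (card C) \<and>
     (\<forall>x. (\<forall>i<L. x i \<in> C) \<and> inj_on x {..<L} \<longrightarrow> t < f (restrict x {..<L}))"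
proof -
  let ?Q = "PiM {..<L} (\<lambda>_. Dn)"
  let ?S = "{x \<in> space ?Q. f x \<le> t}"
  have spD: "space Dn = Rn n"
    using sets_eq_imp_space_eq[OF Ds] by (simp add: space_PiM Rn_def)
  obtain c I where cI: "\<forall>i<m. c i \<in> space Dn \<and> c i \<in> B" "I \<subseteq> {..<m}" "real m / 2 \<le> real (card I)"
    "\<forall>\<sigma> \<in> {..<L} \<rightarrow>\<^sub>E I. inj_on \<sigma> {..<L} \<longrightarrow> (\<lambda>i\<in>{..<L}. c (\<sigma> i)) \<notin> ?S"
    using core[OF D fmeas AEb _ m mp] L by auto
  have finI: "finite I" using cI(2) finite_subset by blast
  have cR: "c i \<in> Rn n" if "i \<in> I" for i using cI(1,2) that spD by auto
  have good: "t < f (\<lambda>i\<in>{..<L}. c (\<sigma> i))" if "\<sigma> \<in> {..<L} \<rightarrow>\<^sub>E I" "inj_on \<sigma> {..<L}" for \<sigma>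
  proof -
    have "(\<lambda>i\<in>{..<L}. c (\<sigma> i)) \<in> space ?Q"
      using that cR spD by (auto simp: space_PiM PiE_iff)
    then show ?thesis using cI(4) that by force
  qed
  define C where "C = c ` I"
  have fib: "card {i\<in>I. c i = v} \<le> L - 1" for v
  proof (rule ccontr)
    assume "\<not> ?thesis"
    then have "L \<le> card {i\<in>I. c i = v}" by simp
    then obtain T where T: "T \<subseteq> {i\<in>I. c i = v}" "card T = L" using obtain_subset_with_card_n by metis
    have finT: "finite T" using finite_subset[OF T(1)] finI by auto
    obtain h where h: "h \<in> {..<L} \<rightarrow>\<^sub>E T" "inj_on h {..<L}" "h ` {..<L} = T"
      using pick_enum[OF finT T(2)] by blast
    have hI: "h \<in> {..<L} \<rightarrow>\<^sub>E I" using h(1) T(1) by (auto simp: PiE_iff)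
    have "T \<noteq> {}" using T(2) L by auto
    then obtain i0 where "i0 \<in> T" by blast
    then have vR: "v \<in> Rn n" using T(1) cR by auto
    have "(\<lambda>i\<in>{..<L}. c (h i)) = (\<lambda>i\<in>{..<L}. v)"
      by (rule restrict_ext) (use h(1) T(1) in \<open>auto simp: PiE_iff subset_iff\<close>)
    then have "t < f (\<lambda>i\<in>{..<L}. v)" using good[OF hI h(2)] by simp
    then show False using fconst[OF vR] by simp
  qed
  have "I = (\<Union>v\<in>C. {i\<in>I. c i = v})" unfolding C_def by auto
  then have "card I \<le> (\<Sum>v\<in>C. card {i\<in>I. c i = v})"
    using card_UN_le[of C "\<lambda>v. {i\<in>I. c i = v}"] finI unfolding C_def by simp
  also have "\<dots> \<le> (\<Sum>v\<in>C. L - 1)" by (intro sum_mono fib)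
  also have "\<dots> = card C * (L - 1)" by simp
  finally have "real (card I) \<le> real (card C * (L - 1))" by (simp only: of_nat_le_iff)
  also have "real (card C * (L - 1)) = real (card C) * (real L - 1)" using L by (simp add: of_nat_diff)
  finally have "real (card I) \<le> real (card C) * (real L - 1)" .
  then have "real m / 2 \<le> real (card C) * (real L - 1)" using cI(3) by linarith
  then have card: "real m / (2 * (real L - 1)) \<le> real (card C)"
    using L by (simp add: divide_le_eq field_simps)
  have prp: "t < f (restrict x {..<L})" if "\<forall>i<L. x i \<in> C" "inj_on x {..<L}" for x
    using good[OF pull_back(1,2)[of L x c I]] pull_back(3)[of L x c I] that unfolding C_def by auto
  show ?thesis
    by (rule exI[of _ C]) (use finI card prp cI(1,2) in \<open>auto simp: C_def\<close>)
qed



lemma ev_lin: fixes a b :: real assumes "a > 0" shows "eventually (\<lambda>n. b < real n * a) sequentially"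
proof -
  obtain N :: nat where N: "b / a < real N" using reals_Archimedean2 by blast
  show ?thesis unfolding eventually_sequentially
  proof (intro exI allI impI)
    fix n assume "N \<le> n"
    then have "b / a < real n" using N by (meson less_le_trans of_nat_le_iff)
    then show "b < real n * a" using assms by (simp add: divide_less_eq)
  qed
qed

lemma asym:
  fixes p :: "nat \<Rightarrow> real" and Dec :: "nat \<Rightarrow> (nat \<Rightarrow> real) set \<Rightarrow> bool"
  assumes L: "L \<ge> 2" and p0: "\<And>n. p n \<ge> 0"
    and lim: "(\<lambda>n. neg_log_rate n (p n)) \<longlonglongrightarrow> l" and El: "ereal E \<le> l"
    and triv: "\<And>n. \<exists>C. Dec n C \<and> code_rate n C = 0"
    and build: "\<And>n m. m \<ge> 1 \<Longrightarrow> real m ^ L * p n \<le> real m / 4 \<Longrightarrow>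
        \<exists>C. Dec n C \<and> finite C \<and> real m / (2 * (real L - 1)) \<le> real (card C)"
  shows "ereal (E / real (L - 1)) \<le> limsup (\<lambda>n. SUP C\<in>{C. Dec n C}. ereal (code_rate n C))"
proof -
  define F where "F n = (SUP C\<in>{C. Dec n C}. ereal (code_rate n C))" for n
  have F0: "0 \<le> F n" for n
  proof -
    obtain C where "Dec n C" "code_rate n C = 0" using triv by blast
    then show ?thesis unfolding F_def by (intro SUP_upper2[of C]) (auto simp: zero_ereal_def)
  qed
  have L1: "real (L - 1) = real L - 1" using L by (simp add: of_nat_diff)
  have "ereal (E / real (L - 1)) \<le> liminf F"
  proof (subst le_Liminf_iff, intro allI impI)
    fix y assume y: "y < ereal (E / real (L - 1))"
    show "eventually (\<lambda>n. y < F n) sequentially"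
    proof (cases "y < 0")
      case True
      then show ?thesis using F0 by (intro always_eventually) (metis less_le_trans)
    next
      case False
      then obtain r where r: "y = ereal r" "0 \<le> r" "r < E / (real L - 1)"
        using y L1 by (cases y) auto
      have Lp: "real L - 1 > 0" using L by simp
      define K where "K = E / (real L - 1)"
      have rK: "r < K" using r(3) unfolding K_def .
      define e2 where "e2 = (r + K) / 2"
      have e2a: "r < e2" unfolding e2_def using rK by (simp add: field_simps)
      have e2b: "e2 < E / (real L - 1)" using rK unfolding e2_def K_def[symmetric] by (simp add: field_simps)
      note e2 = e2a e2b
      have e2L: "e2 * (real L - 1) < E" using e2(2) Lp by (simp add: pos_less_divide_eq)
      define e1 where "e1 = (e2 * (real L - 1) + E) / 2"
      have e1: "e2 * (real L - 1) < e1" "e1 < E" using e2L unfolding e1_def by (simp_all add: field_simps)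
      have e2p: "e2 > 0" using e2 r by linarith
      have ev1: "eventually (\<lambda>n. ereal e1 < neg_log_rate n (p n)) sequentially"
      proof -
        have "ereal e1 < ereal E" using e1(2) by simp
        then have "ereal e1 < l" using El by (rule less_le_trans)
        then show ?thesis by (rule order_tendstoD(1)[OF lim])
      qed
      have ev2: "eventually (\<lambda>n. ln 4 < real n * (e1 - e2 * (real L - 1))) sequentially"
        using e1(1) by (intro ev_lin) simp
      have ev3: "eventually (\<lambda>n. ln 2 < real n * e2) sequentially"
        using e2p by (intro ev_lin) simp
      have ev4: "eventually (\<lambda>n. ln (4 * (real L - 1)) < real n * (e2 - r)) sequentially"
        using e2 by (intro ev_lin) simp
      have ev5: "eventually (\<lambda>n. n \<ge> 1) sequentially" by (rule eventually_ge_at_top)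
      show ?thesis using ev1 ev2 ev3 ev4 ev5
      proof eventually_elim
        case (elim n)
        have n: "real n > 0" using elim(5) by simp
        have pb: "p n \<le> exp (- (real n * e1))"
        proof (cases "p n = 0")
          case True then show ?thesis by simp
        next
          case False
          then have pp: "p n > 0" using p0[of n] by simp
          have "e1 < - ln (p n) / real n" using elim(1) False by (simp add: neg_log_rate_def)
          then have "e1 * real n < - ln (p n)" by (subst (asm) pos_less_divide_eq[OF n])
          then have "real n * e1 < - ln (p n)" by (simp add: mult.commute)
          then have "ln (p n) < - (real n * e1)" by simp
          then show ?thesis using pp by (metis exp_ln less_eq_real_def exp_less_mono)
        qed
        define a where "a = exp (real n * e2)"
        define m where "m = nat \<lfloor>a\<rfloor>"
        have a2: "a > 2" using elim(3) unfolding a_def by (metis exp_less_mono exp_ln zero_less_numeral)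
        have ma: "real m \<le> a" "a - 1 \<le> real m" unfolding m_def using a2 by (auto simp: of_nat_nat)
        have m1: "m \<ge> 1" using ma a2 by simp
        have mhalf: "a / 2 \<le> real m" using ma a2 by simp
        have "real m ^ (L - 1) \<le> a ^ (L - 1)" using ma by (intro power_mono) auto
        also have "\<dots> = exp (real n * e2 * (real L - 1))" unfolding a_def using L1
          by (simp add: exp_of_nat_mult[symmetric] mult.commute)
        finally have mL: "real m ^ (L - 1) \<le> exp (real n * e2 * (real L - 1))" .
        have "real m ^ (L - 1) * p n \<le> exp (real n * e2 * (real L - 1)) * exp (- (real n * e1))"
          using mL pb p0[of n] by (intro mult_mono) auto
        also have "\<dots> = exp (- (real n * (e1 - e2 * (real L - 1))))"
          by (simp add: exp_add[symmetric] algebra_simps)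
        also have "\<dots> \<le> exp (- ln 4)" using elim(2) by simp
        also have "\<dots> = 1 / 4" by (simp add: exp_minus)
        finally have mp1: "real m ^ (L - 1) * p n \<le> 1 / 4" .
        have "real m ^ L * p n = real m * (real m ^ (L - 1) * p n)"
          using L by (metis (no_types, lifting) Suc_diff_1 mult.assoc power_Suc
               order_less_le_trans pos2)
        also have "\<dots> \<le> real m * (1 / 4)" using mp1 by (intro mult_left_mono) auto
        finally have mp: "real m ^ L * p n \<le> real m / 4" by simp
        obtain C where C: "Dec n C" "finite C" "real m / (2 * (real L - 1)) \<le> real (card C)"
          using build[OF m1 mp] by blast
        have "a / (4 * (real L - 1)) = (a / 2) / (2 * (real L - 1))" by simp
        also have "\<dots> \<le> real m / (2 * (real L - 1))"
          using mhalf Lp by (intro divide_right_mono) auto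
        finally have "a / (4 * (real L - 1)) \<le> real m / (2 * (real L - 1))" .
        then have cC: "a / (4 * (real L - 1)) \<le> real (card C)" using C(3) by linarith
        have apos: "a / (4 * (real L - 1)) > 0" using a2 Lp by simp
        have "ln (a / (4 * (real L - 1))) \<le> ln (real (card C))" using cC apos by simp
        then have "real n * e2 - ln (4 * (real L - 1)) \<le> ln (real (card C))"
          using a2 Lp by (simp add: ln_div a_def)
        then have "r < ln (real (card C)) / real n"
          using elim(4) n by (simp add: pos_less_divide_eq algebra_simps)
        then have "y < ereal (code_rate n C)" using r(1) by (simp add: code_rate_def)
        also have "\<dots> \<le> F n" unfolding F_def using C(1) by (intro SUP_upper) auto
        finally show "y < F n" .
      qed
    qed
  qed
  also have "liminf F \<le> limsup F" by (rule Liminf_le_Limsup) simp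
  finally show ?thesis unfolding F_def .
qed



lemma cheb_meas:
  assumes "L \<ge> 1"
  shows "cheb_rad2 n L \<in> borel_measurable (QQ n L)"
proof -
  have eq: "cheb_rad2 n L = (\<lambda>x. INF y\<in>Yq n. gg n L x y)" using cheb_eq_rat[OF assms] by (intro ext) simp
  have "(\<lambda>x. INF y\<in>Yq n. gg n L x y) \<in> borel_measurable (QQ n L)"
    by (rule borel_measurable_cINF_real[OF Yq_countable]) (unfold gg_def, rule g_meas)
  then show ?thesis using eq by simp
qed

lemma set_meas:
  fixes Dn :: "(nat \<Rightarrow> real) measure" and f :: "(nat \<Rightarrow> nat \<Rightarrow> real) \<Rightarrow> real" and t :: real
  assumes Ds: "sets Dn = sets (PiM {..<n} (\<lambda>_. lborel))"
    and f: "f \<in> borel_measurable (QQ n L)"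
  shows "{x \<in> space (PiM {..<L} (\<lambda>_. Dn)). f x \<le> t} \<in> sets (PiM {..<L} (\<lambda>_. Dn))"
proof -
  have se: "sets (PiM {..<L} (\<lambda>_. Dn)) = sets (QQ n L)"
    using Ds by (intro sets_PiM_cong) auto
  have f': "f \<in> borel_measurable (PiM {..<L} (\<lambda>_. Dn))"
    using f by (subst measurable_cong_sets[OF se refl])
  have "f -` {..t} \<inter> space (PiM {..<L} (\<lambda>_. Dn)) \<in> sets (PiM {..<L} (\<lambda>_. Dn))"
    using measurable_sets[OF f' borel_closed[OF closed_atMost[of t]]] by simp
  moreover have "f -` {..t} \<inter> space (PiM {..<L} (\<lambda>_. Dn)) = {x \<in> space (PiM {..<L} (\<lambda>_. Dn)). f x \<le> t}"
    by auto
  ultimately show ?thesis by simp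
qed

lemma cheb_const:
  assumes "L \<ge> 1" "v \<in> Rn n"
  shows "cheb_rad2 n L (\<lambda>i\<in>{..<L}. v) \<le> 0"
proof -
  have bdd: "bdd_below (gg n L (\<lambda>i\<in>{..<L}. v) ` Rn n)"
    using gg_nonneg[OF assms(1)] by (intro bdd_belowI[of _ 0]) auto
  have "cheb_rad2 n L (\<lambda>i\<in>{..<L}. v) \<le> gg n L (\<lambda>i\<in>{..<L}. v) v"
    unfolding cheb_eq_gg by (rule cINF_lower[OF bdd assms(2)])
  also have "gg n L (\<lambda>i\<in>{..<L}. v) v = 0"
  proof -
    have "(\<lambda>i. sqnorm n (\<lambda>j. (\<lambda>i\<in>{..<L}. v) i j - v j)) ` {..<L} = {0}"
      using assms(1) by (auto simp: sqnorm_def image_def intro: exI[of _ 0])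
    then show ?thesis unfolding gg_def by simp
  qed
  finally show ?thesis .
qed

lemma avg_const:
  assumes "L \<ge> 1"
  shows "avg_rad2 n L (\<lambda>i\<in>{..<L}. v) = 0"
  using assms unfolding avg_rad2_def Let_def sqnorm_def by simp

lemma avg_restrict: "avg_rad2 n L (restrict x {..<L}) = avg_rad2 n L x"
  unfolding avg_rad2_def Let_def sqnorm_def by simp

lemma gg_le:
  assumes "L \<ge> 1" "\<forall>i<L. sqnorm n (\<lambda>j. x i j - y j) \<le> c"
  shows "gg n L x y \<le> c"
proof -
  have "0 \<in> {..<L}" using assms(1) by simp
  then have "{..<L} \<noteq> {}" by blast
  then show ?thesis unfolding gg_def using assms(2) by (subst Max_le_iff) auto
qed

lemma cheb_le_gg:
  assumes "L \<ge> 1" "y \<in> Rn n"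
  shows "cheb_rad2 n L x \<le> gg n L x y"
proof -
  have bdd: "bdd_below (gg n L x ` Rn n)"
    using gg_nonneg[OF assms(1)] by (intro bdd_belowI[of _ 0]) auto
  show ?thesis unfolding cheb_eq_gg by (rule cINF_lower[OF bdd assms(2)])
qed

lemma zero_pt:
  assumes "P > 0"
  shows "restrict (\<lambda>_. 0) {..<n} \<in> rball n (\<lambda>_. 0) (sqrt (real n * P))"
proof -
  have "sqnorm n (restrict (\<lambda>_. 0::real) {..<n}) = 0" unfolding sqnorm_def by simp
  moreover have "real n * P \<ge> 0" using assms by simp
  ultimately show ?thesis unfolding rball_def Rn_def by simp
qed

theorem mainTheorem4:
  fixes P N :: real and L :: nat
    and D :: "nat \<Rightarrow> (nat \<Rightarrow> real) measure"
    and E Ebar :: real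
  assumes "P > 0" and "N > 0" and "L \<ge> 2"
    and "\<And>n. prob_space (D n)"
    and "\<And>n. sets (D n) = sets (PiM {..<n} (\<lambda>_. lborel))"
    and "\<And>n. AE x in D n. x \<in> rball n (\<lambda>_. 0) (sqrt (real n * P))"
    and "\<exists>l. (\<lambda>n. neg_log_rate n (measure (PiM {..<L} (\<lambda>_. D n))
                 {x \<in> space (PiM {..<L} (\<lambda>_. D n)). cheb_rad2 n L x \<le> real n * N}))
              \<longlonglongrightarrow> l \<and> ereal E \<le> l"
    and "\<exists>l. (\<lambda>n. neg_log_rate n (measure (PiM {..<L} (\<lambda>_. D n))
                 {x \<in> space (PiM {..<L} (\<lambda>_. D n)). avg_rad2 n L x \<le> real n * N}))
              \<longlonglongrightarrow> l \<and> ereal Ebar \<le> l"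
  shows "list_capacity P N L \<ge> ereal (E / real (L - 1)) \<and>
         avg_list_capacity P N L \<ge> ereal (Ebar / real (L - 1))"
proof -
  have L1: "L \<ge> 1" using assms(3) by simp
  have nN: "real n * N \<ge> 0" for n using assms(2) by simp
  obtain l1 where l1: "(\<lambda>n. neg_log_rate n (measure (PiM {..<L} (\<lambda>_. D n))
                 {x \<in> space (PiM {..<L} (\<lambda>_. D n)). cheb_rad2 n L x \<le> real n * N})) \<longlonglongrightarrow> l1"
      "ereal E \<le> l1" using assms(7) by blast
  obtain l2 where l2: "(\<lambda>n. neg_log_rate n (measure (PiM {..<L} (\<lambda>_. D n))
                 {x \<in> space (PiM {..<L} (\<lambda>_. D n)). avg_rad2 n L x \<le> real n * N})) \<longlonglongrightarrow> l2"
      "ereal Ebar \<le> l2" using assms(8) by blast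
  have single_rate: "code_rate n {restrict (\<lambda>_. 0) {..<n}} = 0" for n
    unfolding code_rate_def by simp
  have part1: "ereal (E / real (L - 1)) \<le> list_capacity P N L"
    unfolding list_capacity_def
  proof (rule asym[where Dec = "\<lambda>n C. list_decodable n P N L C", OF assms(3) _ l1(1) l1(2)])
    show "\<And>n. 0 \<le> measure (PiM {..<L} (\<lambda>_. D n))
                 {x \<in> space (PiM {..<L} (\<lambda>_. D n)). cheb_rad2 n L x \<le> real n * N}" by simp
    show "\<exists>C. list_decodable n P N L C \<and> code_rate n C = 0" for n
    proof (intro exI conjI)
      show "code_rate n {restrict (\<lambda>_. 0) {..<n}} = 0" by (rule single_rate)
      have "card ({restrict (\<lambda>_. 0::real) {..<n}} \<inter> A) \<le> L - 1" for A :: "(nat \<Rightarrow> real) set"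
      proof -
        have "card ({restrict (\<lambda>_. 0::real) {..<n}} \<inter> A) \<le> card {restrict (\<lambda>_. 0::real) {..<n}}"
          by (rule card_mono) auto
        then show ?thesis using assms(3) by simp
      qed
      then show "list_decodable n P N L {restrict (\<lambda>_. 0) {..<n}}"
        unfolding list_decodable_def using zero_pt[OF assms(1)] by auto
    qed
    fix n m :: nat
    assume m: "m \<ge> 1" and mp: "real m ^ L * measure (PiM {..<L} (\<lambda>_. D n))
                 {x \<in> space (PiM {..<L} (\<lambda>_. D n)). cheb_rad2 n L x \<le> real n * N} \<le> real m / 4"
    have fconst: "cheb_rad2 n L (\<lambda>i\<in>{..<L}. v) \<le> real n * N" if "v \<in> Rn n" for v
      using cheb_const[OF L1 that] nN[of n] by linarith
    obtain C where C: "finite C" "C \<subseteq> rball n (\<lambda>_. 0) (sqrt (real n * P))"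
        "real m / (2 * (real L - 1)) \<le> real (card C)"
        "\<forall>x. (\<forall>i<L. x i \<in> C) \<and> inj_on x {..<L} \<longrightarrow> real n * N < cheb_rad2 n L (restrict x {..<L})"
      using code_exists[OF assms(4)[of n] assms(5)[of n] assms(6)[of n] assms(3)
          set_meas[OF assms(5)[of n] cheb_meas[OF L1]] fconst m mp] by blast
    have "list_decodable n P N L C"
      unfolding list_decodable_def
    proof (intro conjI C(1,2) ballI)
      fix y assume y: "y \<in> Rn n"
      show "card (C \<inter> rball n y (sqrt (real n * N))) \<le> L - 1"
      proof (rule ccontr)
        assume "\<not> ?thesis"
        then have "L \<le> card (C \<inter> rball n y (sqrt (real n * N)))" by simp
        then obtain W where W: "W \<subseteq> C \<inter> rball n y (sqrt (real n * N))" "card W = L"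
          using obtain_subset_with_card_n by metis
        have finW: "finite W" using finite_subset[OF W(1)] C(1) by auto
        obtain h where h: "h \<in> {..<L} \<rightarrow>\<^sub>E W" "inj_on h {..<L}" "h ` {..<L} = W"
          using pick_enum[OF finW W(2)] by blast
        have hC: "\<forall>i<L. h i \<in> C" using h(1) W(1) by (auto simp: PiE_iff)
        have lt: "real n * N < cheb_rad2 n L (restrict h {..<L})" using C(4) hC h(2) by blast
        have "\<forall>i<L. sqnorm n (\<lambda>j. restrict h {..<L} i j - y j) \<le> real n * N"
        proof (intro allI impI)
          fix i assume i: "i < L"
          then have "h i \<in> rball n y (sqrt (real n * N))" using h(1) W(1) by (auto simp: PiE_iff)
          then have "sqrt (sqnorm n (\<lambda>j. h i j - y j)) \<le> sqrt (real n * N)" unfolding rball_def by auto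
          then have "sqnorm n (\<lambda>j. h i j - y j) \<le> real n * N" by simp
          then show "sqnorm n (\<lambda>j. restrict h {..<L} i j - y j) \<le> real n * N" using i by simp
        qed
        then have "gg n L (restrict h {..<L}) y \<le> real n * N" by (rule gg_le[OF L1])
        then have "cheb_rad2 n L (restrict h {..<L}) \<le> real n * N"
          using cheb_le_gg[OF L1 y] by (meson order_trans)
        then show False using lt by simp
      qed
    qed
    then show "\<exists>C. list_decodable n P N L C \<and> finite C \<and> real m / (2 * (real L - 1)) \<le> real (card C)"
      using C by blast
  qed
  have part2: "ereal (Ebar / real (L - 1)) \<le> avg_list_capacity P N L"
    unfolding avg_list_capacity_def
  proof (rule asym[where Dec = "\<lambda>n C. avg_list_decodable n P N L C", OF assms(3) _ l2(1) l2(2)])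
    show "\<And>n. 0 \<le> measure (PiM {..<L} (\<lambda>_. D n))
                 {x \<in> space (PiM {..<L} (\<lambda>_. D n)). avg_rad2 n L x \<le> real n * N}" by simp
    show "\<exists>C. avg_list_decodable n P N L C \<and> code_rate n C = 0" for n
    proof (intro exI conjI)
      show "code_rate n {restrict (\<lambda>_. 0) {..<n}} = 0" by (rule single_rate)
      have "\<not> ((\<forall>i<L. x i \<in> {restrict (\<lambda>_. 0) {..<n}}) \<and> inj_on x {..<L})" for x
      proof
        assume a: "(\<forall>i<L. x i \<in> {restrict (\<lambda>_. 0) {..<n}}) \<and> inj_on x {..<L}"
        then have "x 0 = x 1" using assms(3) by auto
        moreover have "(0::nat) \<in> {..<L}" "(1::nat) \<in> {..<L}" using assms(3) by auto
        ultimately show False using a by (metis inj_onD zero_neq_one)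
      qed
      then show "avg_list_decodable n P N L {restrict (\<lambda>_. 0) {..<n}}"
        unfolding avg_list_decodable_def using zero_pt[OF assms(1)] by blast
    qed
    fix n m :: nat
    assume m: "m \<ge> 1" and mp: "real m ^ L * measure (PiM {..<L} (\<lambda>_. D n))
                 {x \<in> space (PiM {..<L} (\<lambda>_. D n)). avg_rad2 n L x \<le> real n * N} \<le> real m / 4"
    have fconst: "avg_rad2 n L (\<lambda>i\<in>{..<L}. v) \<le> real n * N" if "v \<in> Rn n" for v
      using avg_const[OF L1] nN[of n] by simp
    obtain C where C: "finite C" "C \<subseteq> rball n (\<lambda>_. 0) (sqrt (real n * P))"
        "real m / (2 * (real L - 1)) \<le> real (card C)"
        "\<forall>x. (\<forall>i<L. x i \<in> C) \<and> inj_on x {..<L} \<longrightarrow> real n * N < avg_rad2 n L (restrict x {..<L})"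
      using code_exists[OF assms(4)[of n] assms(5)[of n] assms(6)[of n] assms(3)
          set_meas[OF assms(5)[of n] avg_meas] fconst m mp] by blast
    have "avg_list_decodable n P N L C"
      unfolding avg_list_decodable_def using C(1,2,4) by (auto simp: avg_restrict)
    then show "\<exists>C. avg_list_decodable n P N L C \<and> finite C \<and> real m / (2 * (real L - 1)) \<le> real (card C)"
      using C by blast
  qed
  show ?thesis using part1 part2 by simp
qed

end
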